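(* Let $\mathcal G$ be a topological $2$-group, $X$ a topological space, $\pi\colon P\to\overline X$ a principal $\mathcal G$-bundle and $\mathcal A=\{(U_i,\psi_i,\phi_i,\varepsilon_i)\}_{i\in I}$ an atlas of $\pi$. Then $c_{\mathcal A}=(\mathbf x,\mathbf e)$, defined below, is a $\mathcal G$-valued Čech cocycle subordinate to $\mathcal U=\{U_i\}_{i\in I}$.
   Context: Topological $2$-group $\mathcal G=(\mathcal G_1\rightrightarrows\mathcal G_0)$ (groupoid internal to topological groups; product $g*h$ for $t(g)=s(h)$, equal to $h1_{t(g)^{-1}}g$), $\mathcal E=\mathrm{Ker}(s)$, ${}^xe=1_xe1_{x^{-1}}$; $\overline X=(X\rightrightarrows X)$. A principal $\mathcal G$-bundle is a continuous functor $\pi\colon P\to\overline X$ from a $\mathcal G$-$2$-space (topological groupoid with strict continuous right $\mathcal G$-action) admitting an atlas: a family of trivializing charts $(U_i,\psi_i,\phi_i,\varepsilon_i)$ with $\{U_i\}$ an open cover, $\psi_i\colon P|_{U_i}\to\overline{U_i}\times\mathcal G$ a $\mathcal G$-equivariant continuous functor with $\mathcal G$-pseudo-inverse $\phi_i\colon\overline{U_i}\times\mathcal G\to P|_{U_i}$, $\varepsilon_i\colon\phi_i\psi_i\Rightarrow\mathrm{id}_{P|_{U_i}}$ a $\mathcal G_0$-equivariant continuous natural isomorphism, with $\mathrm{pr}_1\psi_i=\pi|_{U_i}$ and $\pi|_{U_i}\phi_i=\mathrm{pr}_1$. Write $U_{ij}=U_i\cap U_j$, etc. The transition functor $T_{ij}=\psi_i\phi_j\colon\overline{U_{ij}}\times\mathcal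 G\to\overline{U_{ij}}\times\mathcal G$ satisfies $T_{ij}(u,1)=(u,\mathbf x_{ij}(u))$ for a unique continuous $\mathbf x_{ij}\colon U_{ij}\to\mathcal G_0$. For $(u,x)\in U_{ijk}\times\mathcal G_0$, set $\gamma_{ijk}(u,x)=\psi_i(\varepsilon_j(\phi_k(u,x)))$; then there is a unique continuous $\mathbf e_{ijk}\colon U_{ijk}\to\mathcal G_1$ with $\gamma_{ijk}(u,x)=(u,\mathbf e_{ijk}(u)1_{\mathbf x_{ij}(u)\mathbf x_{jk}(u)x})$. A $\mathcal G$-valued Čech cocycle subordinate to $\mathcal U$ is a pair of families of continuous maps $\mathbf x_{ij}\colon U_{ij}\to\mathcal G_0$, $\mathbf e_{ijk}\colon U_{ijk}\to\mathcal E$ with $t(\mathbf e_{ijk})\mathbf x_{ij}\mathbf x_{jk}=\mathbf x_{ik}$ on $U_{ijk}$ and $\mathbf e_{ikl}\mathbf e_{ijk}=\mathbf e_{ijl}\,{}^{\mathbf x_{ij}}\mathbf e_{jkl}$ on $U_{ijkl}$. *)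

theory Defs
  imports "HOL-Analysis.Analysis"
begin

text \<open>A topological groupoid: objects and arrows are topological spaces (carriers are the
topspaces); sr/tg are source and target, un the unit (identity arrow), cp the composition
in diagrammatic order (cp f g defined when tg f = sr g), iv the groupoid inverse.\<close>

record ('p,'q) tgpd =
  obj :: "'p topology"
  arr :: "'q topology"
  sr :: "'q \<Rightarrow> 'p"
  tg :: "'q \<Rightarrow> 'p"
  un :: "'p \<Rightarrow> 'q"
  cp :: "'q \<Rightarrow> 'q \<Rightarrow> 'q"
  iv :: "'q \<Rightarrow> 'q"

definition topgroup :: "'a topology \<Rightarrow> ('a \<Rightarrow> 'a \<Rightarrow> 'a) \<Rightarrow> ('a \<Rightarrow> 'a) \<Rightarrow> 'a \<Rightarrow> bool" where
  "topgroup T m i e \<longleftrightarrow>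
     e \<in> topspace T \<and>
     (\<forall>a\<in>topspace T. \<forall>b\<in>topspace T. m a b \<in> topspace T) \<and>
     (\<forall>a\<in>topspace T. i a \<in> topspace T) \<and>
     (\<forall>a\<in>topspace T. \<forall>b\<in>topspace T. \<forall>c\<in>topspace T. m (m a b) c = m a (m b c)) \<and>
     (\<forall>a\<in>topspace T. m e a = a \<and> m a e = a \<and> m (i a) a = e \<and> m a (i a) = e) \<and>
     continuous_map (prod_topology T T) T (\<lambda>(a,b). m a b) \<and>
     continuous_map T T i"

definition tgroupoid :: "('p,'q,'z) tgpd_scheme \<Rightarrow> bool" where
  "tgroupoid C \<longleftrightarrow>
     continuous_map (arr C) (obj C) (sr C) \<and>
     continuous_map (arr C) (obj C) (tg C) \<and>
     continuous_map (obj C) (arr C) (un C) \<and>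
     continuous_map (arr C) (arr C) (iv C) \<and>
     continuous_map (subtopology (prod_topology (arr C) (arr C)) {(f,g). tg C f = sr C g})
        (arr C) (\<lambda>(f,g). cp C f g) \<and>
     (\<forall>p\<in>topspace (obj C). sr C (un C p) = p \<and> tg C (un C p) = p) \<and>
     (\<forall>f\<in>topspace (arr C). \<forall>g\<in>topspace (arr C). tg C f = sr C g \<longrightarrow>
        sr C (cp C f g) = sr C f \<and> tg C (cp C f g) = tg C g) \<and>
     (\<forall>f\<in>topspace (arr C). \<forall>g\<in>topspace (arr C). \<forall>h\<in>topspace (arr C).
        tg C f = sr C g \<longrightarrow> tg C g = sr C h \<longrightarrow> cp C (cp C f g) h = cp C f (cp C g h)) \<and>
     (\<forall>f\<in>topspace (arr C). cp C (un C (sr C f)) f = f \<and> cp C f (un C (tg C f)) = f) \<and>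
     (\<forall>f\<in>topspace (arr C). sr C (iv C f) = tg C f \<and> tg C (iv C f) = sr C f \<and>
        cp C f (iv C f) = un C (sr C f) \<and> cp C (iv C f) f = un C (tg C f))"

text \<open>A topological 2-group: a groupoid internal to topological groups.
G0 = obj G with (mul0, inv0, one0); G1 = arr G with (mul1, inv1, one1).\<close>

record ('x,'g) tgrp2 = "('x,'g) tgpd" +
  mul0 :: "'x \<Rightarrow> 'x \<Rightarrow> 'x"
  inv0 :: "'x \<Rightarrow> 'x"
  one0 :: "'x"
  mul1 :: "'g \<Rightarrow> 'g \<Rightarrow> 'g"
  inv1 :: "'g \<Rightarrow> 'g"
  one1 :: "'g"

definition two_group :: "('x,'g) tgrp2 \<Rightarrow> bool" where
  "two_group G \<longleftrightarrow>
     tgroupoid G \<and>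
     topgroup (obj G) (mul0 G) (inv0 G) (one0 G) \<and>
     topgroup (arr G) (mul1 G) (inv1 G) (one1 G) \<and>
     (\<forall>g\<in>topspace (arr G). \<forall>h\<in>topspace (arr G).
        sr G (mul1 G g h) = mul0 G (sr G g) (sr G h) \<and>
        tg G (mul1 G g h) = mul0 G (tg G g) (tg G h)) \<and>
     (\<forall>x\<in>topspace (obj G). \<forall>y\<in>topspace (obj G). un G (mul0 G x y) = mul1 G (un G x) (un G y)) \<and>
     (\<forall>f\<in>topspace (arr G). \<forall>g\<in>topspace (arr G). \<forall>f'\<in>topspace (arr G). \<forall>g'\<in>topspace (arr G).
        tg G f = sr G g \<longrightarrow> tg G f' = sr G g' \<longrightarrow>
        cp G (mul1 G f f') (mul1 G g g') = mul1 G (cp G f g) (cp G f' g'))"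

definition kerS :: "('x,'g) tgrp2 \<Rightarrow> 'g set" where
  "kerS G = {g \<in> topspace (arr G). sr G g = one0 G}"

definition conj2 :: "('x,'g) tgrp2 \<Rightarrow> 'x \<Rightarrow> 'g \<Rightarrow> 'g" where
  "conj2 G x e = mul1 G (mul1 G (un G x) e) (un G (inv0 G x))"

text \<open>A G-2-space: a topological groupoid with a strict continuous right G-action
(act0 on objects, act1 on arrows), i.e. a continuous action functor P x G -> P.\<close>

record ('p,'q,'x,'g) gspace = "('p,'q) tgpd" +
  act0 :: "'p \<Rightarrow> 'x \<Rightarrow> 'p"
  act1 :: "'q \<Rightarrow> 'g \<Rightarrow> 'q"

definition g2space :: "('x,'g) tgrp2 \<Rightarrow> ('p,'q,'x,'g) gspace \<Rightarrow> bool" where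
  "g2space G P \<longleftrightarrow>
     tgroupoid P \<and>
     continuous_map (prod_topology (obj P) (obj G)) (obj P) (\<lambda>(p,x). act0 P p x) \<and>
     continuous_map (prod_topology (arr P) (arr G)) (arr P) (\<lambda>(f,g). act1 P f g) \<and>
     (\<forall>p\<in>topspace (obj P). act0 P p (one0 G) = p) \<and>
     (\<forall>p\<in>topspace (obj P). \<forall>x\<in>topspace (obj G). \<forall>y\<in>topspace (obj G).
        act0 P (act0 P p x) y = act0 P p (mul0 G x y)) \<and>
     (\<forall>f\<in>topspace (arr P). act1 P f (one1 G) = f) \<and>
     (\<forall>f\<in>topspace (arr P). \<forall>g\<in>topspace (arr G). \<forall>h\<in>topspace (arr G).
        act1 P (act1 P f g) h = act1 P f (mul1 G g h)) \<and>
     (\<forall>f\<in>topspace (arr P). \<forall>g\<in>topspace (arr G).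
        sr P (act1 P f g) = act0 P (sr P f) (sr G g) \<and>
        tg P (act1 P f g) = act0 P (tg P f) (tg G g)) \<and>
     (\<forall>p\<in>topspace (obj P). \<forall>x\<in>topspace (obj G).
        act1 P (un P p) (un G x) = un P (act0 P p x)) \<and>
     (\<forall>f\<in>topspace (arr P). \<forall>f'\<in>topspace (arr P). \<forall>g\<in>topspace (arr G). \<forall>g'\<in>topspace (arr G).
        tg P f = sr P f' \<longrightarrow> tg G g = sr G g' \<longrightarrow>
        act1 P (cp P f f') (cp G g g') = cp P (act1 P f g) (act1 P f' g'))"

definition cfunctor where
  "cfunctor C D F0 F1 \<longleftrightarrow>
     continuous_map (obj C) (obj D) F0 \<and>
     continuous_map (arr C) (arr D) F1 \<and>
     (\<forall>f\<in>topspace (arr C). sr D (F1 f) = F0 (sr C f) \<and> tg D (F1 f) = F0 (tg C f)) \<and>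
     (\<forall>p\<in>topspace (obj C). F1 (un C p) = un D (F0 p)) \<and>
     (\<forall>f\<in>topspace (arr C). \<forall>g\<in>topspace (arr C). tg C f = sr C g \<longrightarrow>
        F1 (cp C f g) = cp D (F1 f) (F1 g))"

text \<open>A continuous natural transformation eta : F => H between functors C -> D
(automatically a natural isomorphism, D being a groupoid).\<close>

definition cnat where
  "cnat C D F0 F1 H0 H1 \<eta> \<longleftrightarrow>
     continuous_map (obj C) (arr D) \<eta> \<and>
     (\<forall>p\<in>topspace (obj C). sr D (\<eta> p) = F0 p \<and> tg D (\<eta> p) = H0 p) \<and>
     (\<forall>f\<in>topspace (arr C). cp D (\<eta> (sr C f)) (H1 f) = cp D (F1 f) (\<eta> (tg C f)))"

text \<open>A continuous functor pi : P -> Xbar (Xbar the discrete groupoid on X) is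
determined by its object map.\<close>

definition bundle_functor :: "'a topology \<Rightarrow> ('p,'q,'x,'g) gspace \<Rightarrow> ('p \<Rightarrow> 'a) \<Rightarrow> bool" where
  "bundle_functor X P \<pi> \<longleftrightarrow>
     continuous_map (obj P) X \<pi> \<and>
     (\<forall>f\<in>topspace (arr P). \<pi> (sr P f) = \<pi> (tg P f))"

definition restr :: "('p,'q,'x,'g) gspace \<Rightarrow> ('p \<Rightarrow> 'a) \<Rightarrow> 'a set \<Rightarrow> ('p,'q) tgpd" where
  "restr P \<pi> U =
     \<lparr> obj = subtopology (obj P) {p. \<pi> p \<in> U},
       arr = subtopology (arr P) {f. \<pi> (sr P f) \<in> U},
       sr = sr P, tg = tg P, un = un P, cp = cp P, iv = iv P \<rparr>"

definition trivb :: "('x,'g) tgrp2 \<Rightarrow> 'a topology \<Rightarrow> 'a set \<Rightarrow> ('a \<times> 'x, 'a \<times> 'g) tgpd" where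
  "trivb G X U =
     \<lparr> obj = prod_topology (subtopology X U) (obj G),
       arr = prod_topology (subtopology X U) (arr G),
       sr = (\<lambda>(u,g). (u, sr G g)), tg = (\<lambda>(u,g). (u, tg G g)),
       un = (\<lambda>(u,x). (u, un G x)),
       cp = (\<lambda>(u,g) (v,h). (u, cp G g h)),
       iv = (\<lambda>(u,g). (u, iv G g)) \<rparr>"

record ('a,'p,'q,'x,'g) chart =
  cU :: "'a set"
  psi0 :: "'p \<Rightarrow> 'a \<times> 'x"
  psi1 :: "'q \<Rightarrow> 'a \<times> 'g"
  phi0 :: "'a \<times> 'x \<Rightarrow> 'p"
  phi1 :: "'a \<times> 'g \<Rightarrow> 'q"
  eps :: "'p \<Rightarrow> 'q"

definition is_chart ::
  "('x,'g) tgrp2 \<Rightarrow> 'a topology \<Rightarrow> ('p,'q,'x,'g) gspace \<Rightarrow> ('p \<Rightarrow> 'a)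
     \<Rightarrow> ('a,'p,'q,'x,'g) chart \<Rightarrow> bool" where
  "is_chart G X P \<pi> c \<longleftrightarrow>
     openin X (cU c) \<and>
     (let PU = restr P \<pi> (cU c); T = trivb G X (cU c) in
       \<comment> \<open>psi : P|_U -> Ubar x G, a G-equivariant continuous functor
           (P|_U is G-stable, so that it is a G-2-space)\<close>
       cfunctor PU T (psi0 c) (psi1 c) \<and>
       (\<forall>p\<in>topspace (obj PU). \<forall>x\<in>topspace (obj G).
          act0 P p x \<in> topspace (obj PU) \<and>
          psi0 c (act0 P p x) = (fst (psi0 c p), mul0 G (snd (psi0 c p)) x)) \<and>
       (\<forall>f\<in>topspace (arr PU). \<forall>g\<in>topspace (arr G).
          act1 P f g \<in> topspace (arr PU) \<and>
          psi1 c (act1 P f g) = (fst (psi1 c f), mul1 G (snd (psi1 c f)) g)) \<and>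
       \<comment> \<open>phi : Ubar x G -> P|_U, a G-equivariant continuous functor\<close>
       cfunctor T PU (phi0 c) (phi1 c) \<and>
       (\<forall>u\<in>cU c. \<forall>x\<in>topspace (obj G). \<forall>y\<in>topspace (obj G).
          phi0 c (u, mul0 G x y) = act0 P (phi0 c (u, x)) y) \<and>
       (\<forall>u\<in>cU c. \<forall>g\<in>topspace (arr G). \<forall>h\<in>topspace (arr G).
          phi1 c (u, mul1 G g h) = act1 P (phi1 c (u, g)) h) \<and>
       \<comment> \<open>pseudo-inverse: continuous natural isos phi psi => id (this is eps) and psi phi => id\<close>
       cnat PU PU (\<lambda>p. phi0 c (psi0 c p)) (\<lambda>f. phi1 c (psi1 c f)) (\<lambda>p. p) (\<lambda>f. f) (eps c) \<and>
       (\<exists>\<eta>. cnat T T (\<lambda>y. psi0 c (phi0 c y)) (\<lambda>g. psi1 c (phi1 c g)) (\<lambda>y. y) (\<lambda>g. g) \<eta>) \<and>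
       \<comment> \<open>eps is G0-equivariant\<close>
       (\<forall>p\<in>topspace (obj PU). \<forall>x\<in>topspace (obj G).
          eps c (act0 P p x) = act1 P (eps c p) (un G x)) \<and>
       \<comment> \<open>pr1 psi = pi|_U and pi|_U phi = pr1\<close>
       (\<forall>p\<in>topspace (obj PU). fst (psi0 c p) = \<pi> p) \<and>
       (\<forall>y\<in>topspace (obj T). \<pi> (phi0 c y) = fst y))"

definition is_atlas ::
  "('x,'g) tgrp2 \<Rightarrow> 'a topology \<Rightarrow> ('p,'q,'x,'g) gspace \<Rightarrow> ('p \<Rightarrow> 'a)
     \<Rightarrow> 'i set \<Rightarrow> ('i \<Rightarrow> ('a,'p,'q,'x,'g) chart) \<Rightarrow> bool" where
  "is_atlas G X P \<pi> I A \<longleftrightarrow>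
     (\<forall>i\<in>I. is_chart G X P \<pi> (A i)) \<and> (\<Union>i\<in>I. cU (A i)) = topspace X"

text \<open>x_ij(u) determined by T_ij(u,1) = (u, x_ij(u)) with T_ij = psi_i phi_j.\<close>

definition xA :: "('x,'g) tgrp2 \<Rightarrow> ('i \<Rightarrow> ('a,'p,'q,'x,'g) chart) \<Rightarrow> 'i \<Rightarrow> 'i \<Rightarrow> 'a \<Rightarrow> 'x" where
  "xA G A i j u = snd (psi0 (A i) (phi0 (A j) (u, one0 G)))"

definition eA :: "('x,'g) tgrp2 \<Rightarrow> ('i \<Rightarrow> ('a,'p,'q,'x,'g) chart) \<Rightarrow> 'i \<Rightarrow> 'i \<Rightarrow> 'i \<Rightarrow> 'a \<Rightarrow> 'g" where
  "eA G A i j k u = (THE e. e \<in> topspace (arr G) \<and>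
     (\<forall>x\<in>topspace (obj G). psi1 (A i) (eps (A j) (phi0 (A k) (u, x))) =
        (u, mul1 G e (un G (mul0 G (mul0 G (xA G A i j u) (xA G A j k u)) x)))))"

definition cech_cocycle ::
  "('x,'g) tgrp2 \<Rightarrow> 'a topology \<Rightarrow> 'i set \<Rightarrow> ('i \<Rightarrow> 'a set)
     \<Rightarrow> ('i \<Rightarrow> 'i \<Rightarrow> 'a \<Rightarrow> 'x) \<Rightarrow> ('i \<Rightarrow> 'i \<Rightarrow> 'i \<Rightarrow> 'a \<Rightarrow> 'g) \<Rightarrow> bool" where
  "cech_cocycle G X I U x e \<longleftrightarrow>
     (\<forall>i\<in>I. \<forall>j\<in>I. continuous_map (subtopology X (U i \<inter> U j)) (obj G) (x i j)) \<and>
     (\<forall>i\<in>I. \<forall>j\<in>I. \<forall>k\<in>I.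
        continuous_map (subtopology X (U i \<inter> U j \<inter> U k)) (subtopology (arr G) (kerS G)) (e i j k)) \<and>
     (\<forall>i\<in>I. \<forall>j\<in>I. \<forall>k\<in>I. \<forall>u\<in>U i \<inter> U j \<inter> U k.
        mul0 G (mul0 G (tg G (e i j k u)) (x i j u)) (x j k u) = x i k u) \<and>
     (\<forall>i\<in>I. \<forall>j\<in>I. \<forall>k\<in>I. \<forall>l\<in>I. \<forall>u\<in>U i \<inter> U j \<inter> U k \<inter> U l.
        mul1 G (e i k l u) (e i j k u) = mul1 G (e i j l u) (conj2 G (x i j u) (e j k l u)))"

end

theory Submission
  imports Defs
begin

locale tgrp =
  fixes T :: "'a topology" and m :: "'a \<Rightarrow> 'a \<Rightarrow> 'a" and i :: "'a \<Rightarrow> 'a" and e :: 'a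
  assumes tg: "topgroup T m i e"
begin
lemma one_c[simp]: "e \<in> topspace T" using tg by (simp add: topgroup_def)
lemma m_c[simp]: "a \<in> topspace T \<Longrightarrow> b \<in> topspace T \<Longrightarrow> m a b \<in> topspace T" using tg by (simp add: topgroup_def)
lemma i_c[simp]: "a \<in> topspace T \<Longrightarrow> i a \<in> topspace T" using tg by (simp add: topgroup_def)
lemma assoc[simp]: "a \<in> topspace T \<Longrightarrow> b \<in> topspace T \<Longrightarrow> c \<in> topspace T \<Longrightarrow> m (m a b) c = m a (m b c)"
  using tg by (simp add: topgroup_def)
lemma lid[simp]: "a \<in> topspace T \<Longrightarrow> m e a = a" using tg by (simp add: topgroup_def)
lemma rid[simp]: "a \<in> topspace T \<Longrightarrow> m a e = a" using tg by (simp add: topgroup_def)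
lemma linv[simp]: "a \<in> topspace T \<Longrightarrow> m (i a) a = e" using tg by (simp add: topgroup_def)
lemma rinv[simp]: "a \<in> topspace T \<Longrightarrow> m a (i a) = e" using tg by (simp add: topgroup_def)
lemma linv2[simp]: "a \<in> topspace T \<Longrightarrow> b \<in> topspace T \<Longrightarrow> m (i a) (m a b) = b"
  using assoc[of "i a" a b] by simp
lemma rinv2[simp]: "a \<in> topspace T \<Longrightarrow> b \<in> topspace T \<Longrightarrow> m a (m (i a) b) = b"
  using assoc[of a "i a" b] by simp
lemma rcancel: assumes "a \<in> topspace T" "b \<in> topspace T" "c \<in> topspace T" "m a c = m b c" shows "a = b"
proof -
  have "m (m a c) (i c) = m (m b c) (i c)" using assms(4) by simp
  thus ?thesis using assms(1-3) by simp
qed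
lemma lcancel: assumes "a \<in> topspace T" "b \<in> topspace T" "c \<in> topspace T" "m c a = m c b" shows "a = b"
proof -
  have "m (i c) (m c a) = m (i c) (m c b)" using assms(4) by simp
  thus ?thesis using assms(1-3) by simp
qed
lemma idem: "a \<in> topspace T \<Longrightarrow> m a a = a \<Longrightarrow> a = e"
  using rcancel[of a e a] by simp
lemma inv_m: assumes "a \<in> topspace T" "b \<in> topspace T" shows "i (m a b) = m (i b) (i a)"
proof (rule rcancel[of _ _ "m a b"])
  show "m (i (m a b)) (m a b) = m (m (i b) (i a)) (m a b)" using assms by simp
qed (use assms in auto)
lemma cont_m: "continuous_map (prod_topology T T) T (\<lambda>(a,b). m a b)" using tg by (simp add: topgroup_def)
lemma cont_i: "continuous_map T T i" using tg by (simp add: topgroup_def)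
lemma cont_m2: "continuous_map Y T f \<Longrightarrow> continuous_map Y T g \<Longrightarrow> continuous_map Y T (\<lambda>y. m (f y) (g y))"
  using continuous_map_compose[OF continuous_map_pairedI cont_m, of Y f g] by (simp add: o_def)
end

lemma cmap_in: "continuous_map X Y f \<Longrightarrow> x \<in> topspace X \<Longrightarrow> f x \<in> topspace Y"
  using continuous_map_image_subset_topspace by blast

lemma cm_comp: "continuous_map X Y f \<Longrightarrow> continuous_map Y Z g \<Longrightarrow> continuous_map X Z (\<lambda>x. g (f x))"
  using continuous_map_compose[of X Y f Z g] by (simp add: o_def)
lemma cm_incl: "S \<subseteq> V \<Longrightarrow> continuous_map (subtopology X S) (subtopology X V) (\<lambda>u. u)"
  using continuous_map_id_subt[of X S] by (auto simp: continuous_map_in_subtopology id_def)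

locale bnd =
  fixes G :: "('x,'g) tgrp2" and X :: "'a topology" and P :: "('p,'q,'x,'g) gspace"
    and \<pi> :: "'p \<Rightarrow> 'a" and I :: "'i set" and A :: "'i \<Rightarrow> ('a,'p,'q,'x,'g) chart"
  assumes TG: "two_group G"
    and GS: "g2space G P"
    and BF: "bundle_functor X P \<pi>"
    and AT: "is_atlas G X P \<pi> I A"
begin

sublocale G0: tgrp "obj G" "mul0 G" "inv0 G" "one0 G"
  unfolding tgrp_def using TG unfolding two_group_def by (elim conjE) assumption
sublocale G1: tgrp "arr G" "mul1 G" "inv1 G" "one1 G"
  unfolding tgrp_def using TG unfolding two_group_def by (elim conjE) assumption

lemma Ggpd: "tgroupoid G" using TG unfolding two_group_def by (elim conjE) assumption
lemma cont_un: "continuous_map (obj G) (arr G) (un G)" using Ggpd unfolding tgroupoid_def by (elim conjE) assumption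
lemma cont_sr: "continuous_map (arr G) (obj G) (sr G)" using Ggpd unfolding tgroupoid_def by (elim conjE) assumption
lemma cont_tg: "continuous_map (arr G) (obj G) (tg G)" using Ggpd unfolding tgroupoid_def by (elim conjE) assumption

lemma un_c[simp]: "x \<in> topspace (obj G) \<Longrightarrow> un G x \<in> topspace (arr G)"
  by (rule cmap_in[OF cont_un])
lemma sr_c[simp]: "g \<in> topspace (arr G) \<Longrightarrow> sr G g \<in> topspace (obj G)"
  by (rule cmap_in[OF cont_sr])
lemma tg_c[simp]: "g \<in> topspace (arr G) \<Longrightarrow> tg G g \<in> topspace (obj G)"
  by (rule cmap_in[OF cont_tg])
lemma sr_un[simp]: "x \<in> topspace (obj G) \<Longrightarrow> sr G (un G x) = x"
  using Ggpd unfolding tgroupoid_def by simp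
lemma tg_un[simp]: "x \<in> topspace (obj G) \<Longrightarrow> tg G (un G x) = x"
  using Ggpd unfolding tgroupoid_def by simp
lemma cp_unl: "g \<in> topspace (arr G) \<Longrightarrow> cp G (un G (sr G g)) g = g"
  using Ggpd unfolding tgroupoid_def by simp
lemma cp_unr: "g \<in> topspace (arr G) \<Longrightarrow> cp G g (un G (tg G g)) = g"
  using Ggpd unfolding tgroupoid_def by simp
lemma sr_m[simp]: "g \<in> topspace (arr G) \<Longrightarrow> h \<in> topspace (arr G) \<Longrightarrow> sr G (mul1 G g h) = mul0 G (sr G g) (sr G h)"
  using TG unfolding two_group_def by simp
lemma tg_m[simp]: "g \<in> topspace (arr G) \<Longrightarrow> h \<in> topspace (arr G) \<Longrightarrow> tg G (mul1 G g h) = mul0 G (tg G g) (tg G h)"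
  using TG unfolding two_group_def by simp
lemma un_m: "x \<in> topspace (obj G) \<Longrightarrow> y \<in> topspace (obj G) \<Longrightarrow> un G (mul0 G x y) = mul1 G (un G x) (un G y)"
  using TG unfolding two_group_def by simp
lemma interch: "f \<in> topspace (arr G) \<Longrightarrow> g \<in> topspace (arr G) \<Longrightarrow> f' \<in> topspace (arr G) \<Longrightarrow> g' \<in> topspace (arr G) \<Longrightarrow>
        tg G f = sr G g \<Longrightarrow> tg G f' = sr G g' \<Longrightarrow>
        cp G (mul1 G f f') (mul1 G g g') = mul1 G (cp G f g) (cp G f' g')"
  using TG unfolding two_group_def by simp
lemma un_one[simp]: "un G (one0 G) = one1 G"
proof -
  have "mul1 G (un G (one0 G)) (un G (one0 G)) = un G (one0 G)"
    by (metis un_m G0.lid G0.one_c)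
  then show ?thesis using G1.idem[of "un G (one0 G)"] by simp
qed
lemma sr_one[simp]: "sr G (one1 G) = one0 G" using sr_un[of "one0 G"] by simp
lemma tg_one[simp]: "tg G (one1 G) = one0 G" using tg_un[of "one0 G"] by simp

lemma cp_formula:
  assumes g: "g \<in> topspace (arr G)" and h: "h \<in> topspace (arr G)" and c: "tg G g = sr G h"
  shows "cp G g h = mul1 G h (mul1 G (un G (inv0 G (tg G g))) g)"
proof -
  let ?b = "tg G g"
  have b: "?b \<in> topspace (obj G)" using g by simp
  have 1: "g = mul1 G (un G ?b) (mul1 G (un G (inv0 G ?b)) g)"
  proof -
    have "mul1 G (un G ?b) (mul1 G (un G (inv0 G ?b)) g) = mul1 G (mul1 G (un G ?b) (un G (inv0 G ?b))) g"
      using b g by simp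
    also have "\<dots> = g" using b g by (simp del: G1.assoc add: un_m[symmetric])
    finally show ?thesis by (rule sym)
  qed
  have 2: "h = mul1 G h (one1 G)" using h by simp
  have "cp G g h = cp G (mul1 G (un G ?b) (mul1 G (un G (inv0 G ?b)) g)) (mul1 G h (one1 G))"
    by (rule arg_cong2[OF 1 2])
  also have "\<dots> = mul1 G (cp G (un G ?b) h) (cp G (mul1 G (un G (inv0 G ?b)) g) (one1 G))"
    by (rule interch) (use b g h c in \<open>simp_all del: G1.assoc G0.assoc\<close>)
  also have "cp G (un G ?b) h = h" using cp_unl[OF h] c by (simp only:)
  also have "cp G (mul1 G (un G (inv0 G ?b)) g) (one1 G) = mul1 G (un G (inv0 G ?b)) g"
    using cp_unr[of "mul1 G (un G (inv0 G ?b)) g"] b g by simp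
  finally show ?thesis .
qed


lemma Pgpd: "tgroupoid P" using GS unfolding g2space_def by (elim conjE) assumption
lemma P_sr_c[simp]: "f \<in> topspace (arr P) \<Longrightarrow> sr P f \<in> topspace (obj P)"
  using Pgpd unfolding tgroupoid_def by (elim conjE) (erule cmap_in)
lemma P_tg_c[simp]: "f \<in> topspace (arr P) \<Longrightarrow> tg P f \<in> topspace (obj P)"
  using Pgpd unfolding tgroupoid_def by (elim conjE) (erule cmap_in)
lemma P_un_c[simp]: "p \<in> topspace (obj P) \<Longrightarrow> un P p \<in> topspace (arr P)"
  using Pgpd unfolding tgroupoid_def by (elim conjE) (erule cmap_in)
lemma P_cp_c: assumes "f \<in> topspace (arr P)" "g \<in> topspace (arr P)" "tg P f = sr P g"
  shows "cp P f g \<in> topspace (arr P)"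
proof -
  have "continuous_map (subtopology (prod_topology (arr P) (arr P)) {(f,g). tg P f = sr P g})
        (arr P) (\<lambda>(f,g). cp P f g)" using Pgpd unfolding tgroupoid_def by (elim conjE) assumption
  from cmap_in[OF this, of "(f,g)"] show ?thesis using assms by simp
qed
lemma pi_srtg: "f \<in> topspace (arr P) \<Longrightarrow> \<pi> (tg P f) = \<pi> (sr P f)"
  using BF unfolding bundle_functor_def by simp
lemma pi_cont: "continuous_map (obj P) X \<pi>"
  using BF unfolding bundle_functor_def by simp

context fixes i assumes iI: "i \<in> I" begin

lemma ch: "is_chart G X P \<pi> (A i)" using AT iI unfolding is_atlas_def by blast
lemma U_open: "openin X (cU (A i))" using ch unfolding is_chart_def by (elim conjE)
lemma U_sub: "cU (A i) \<subseteq> topspace X" using U_open by (rule openin_subset)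
lemma U_mem: "u \<in> cU (A i) \<Longrightarrow> u \<in> topspace X" using U_sub by blast

lemma psi_f: "cfunctor (restr P \<pi> (cU (A i))) (trivb G X (cU (A i))) (psi0 (A i)) (psi1 (A i))"
  using ch unfolding is_chart_def Let_def by (elim conjE) assumption
lemma psi0_eq: "\<forall>p\<in>topspace (obj (restr P \<pi> (cU (A i)))). \<forall>x\<in>topspace (obj G).
          act0 P p x \<in> topspace (obj (restr P \<pi> (cU (A i)))) \<and>
          psi0 (A i) (act0 P p x) = (fst (psi0 (A i) p), mul0 G (snd (psi0 (A i) p)) x)"
  using ch unfolding is_chart_def Let_def by (elim conjE) assumption
lemma psi1_eq: "\<forall>f\<in>topspace (arr (restr P \<pi> (cU (A i)))). \<forall>g\<in>topspace (arr G).
          act1 P f g \<in> topspace (arr (restr P \<pi> (cU (A i)))) \<and>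
          psi1 (A i) (act1 P f g) = (fst (psi1 (A i) f), mul1 G (snd (psi1 (A i) f)) g)"
  using ch unfolding is_chart_def Let_def by (elim conjE) assumption
lemma phi_f: "cfunctor (trivb G X (cU (A i))) (restr P \<pi> (cU (A i))) (phi0 (A i)) (phi1 (A i))"
  using ch unfolding is_chart_def Let_def by (elim conjE) assumption
lemma phi0_act: "\<forall>u\<in>cU (A i). \<forall>x\<in>topspace (obj G). \<forall>y\<in>topspace (obj G).
          phi0 (A i) (u, mul0 G x y) = act0 P (phi0 (A i) (u, x)) y"
  using ch unfolding is_chart_def Let_def by (elim conjE) assumption
lemma phi1_act: "\<forall>u\<in>cU (A i). \<forall>g\<in>topspace (arr G). \<forall>h\<in>topspace (arr G).
          phi1 (A i) (u, mul1 G g h) = act1 P (phi1 (A i) (u, g)) h"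
  using ch unfolding is_chart_def Let_def by (elim conjE) assumption
lemma eps_n: "cnat (restr P \<pi> (cU (A i))) (restr P \<pi> (cU (A i))) (\<lambda>p. phi0 (A i) (psi0 (A i) p)) (\<lambda>f. phi1 (A i) (psi1 (A i) f)) (\<lambda>p. p) (\<lambda>f. f) (eps (A i))"
  using ch unfolding is_chart_def Let_def by (elim conjE) assumption
lemma eps_act0: "\<forall>p\<in>topspace (obj (restr P \<pi> (cU (A i)))). \<forall>x\<in>topspace (obj G).
          eps (A i) (act0 P p x) = act1 P (eps (A i) p) (un G x)"
  using ch unfolding is_chart_def Let_def by (elim conjE) assumption
lemma psi0_fst0: "\<forall>p\<in>topspace (obj (restr P \<pi> (cU (A i)))). fst (psi0 (A i) p) = \<pi> p"
  using ch unfolding is_chart_def Let_def by (elim conjE) assumption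
lemma phi0_pi0: "\<forall>y\<in>topspace (obj (trivb G X (cU (A i)))). \<pi> (phi0 (A i) y) = fst y"
  using ch unfolding is_chart_def Let_def by (elim conjE) assumption

lemma top_r0: "topspace (obj (restr P \<pi> (cU (A i)))) = {p \<in> topspace (obj P). \<pi> p \<in> cU (A i)}"
  by (auto simp: restr_def)
lemma top_r1: "topspace (arr (restr P \<pi> (cU (A i)))) = {f \<in> topspace (arr P). \<pi> (sr P f) \<in> cU (A i)}"
  by (auto simp: restr_def)
lemma top_t0: "topspace (obj (trivb G X (cU (A i)))) = cU (A i) \<times> topspace (obj G)"
  using U_sub by (auto simp: trivb_def)
lemma top_t1: "topspace (arr (trivb G X (cU (A i)))) = cU (A i) \<times> topspace (arr G)"
  using U_sub by (auto simp: trivb_def)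

lemma psi0_cont: "continuous_map (subtopology (obj P) {p. \<pi> p \<in> cU (A i)}) (prod_topology (subtopology X (cU (A i))) (obj G)) (psi0 (A i))"
  using psi_f unfolding cfunctor_def by (simp add: restr_def trivb_def)
lemma psi1_cont: "continuous_map (subtopology (arr P) {f. \<pi> (sr P f) \<in> cU (A i)}) (prod_topology (subtopology X (cU (A i))) (arr G)) (psi1 (A i))"
  using psi_f unfolding cfunctor_def by (simp add: restr_def trivb_def)
lemma phi0_cont: "continuous_map (prod_topology (subtopology X (cU (A i))) (obj G)) (subtopology (obj P) {p. \<pi> p \<in> cU (A i)}) (phi0 (A i))"
  using phi_f unfolding cfunctor_def by (simp add: restr_def trivb_def)
lemma eps_cont: "continuous_map (subtopology (obj P) {p. \<pi> p \<in> cU (A i)}) (subtopology (arr P) {f. \<pi> (sr P f) \<in> cU (A i)}) (eps (A i))"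
  using eps_n unfolding cnat_def by (simp add: restr_def)

lemma psi0_mem: "p \<in> topspace (obj P) \<Longrightarrow> \<pi> p \<in> cU (A i) \<Longrightarrow> psi0 (A i) p = (\<pi> p, snd (psi0 (A i) p)) \<and> snd (psi0 (A i) p) \<in> topspace (obj G)"
proof -
  assume a: "p \<in> topspace (obj P)" "\<pi> p \<in> cU (A i)"
  have "psi0 (A i) p \<in> topspace (obj (trivb G X (cU (A i))))"
    using psi_f a unfolding cfunctor_def by (elim conjE) (erule cmap_in, simp add: top_r0)
  moreover have "fst (psi0 (A i) p) = \<pi> p" using psi0_fst0 a by (simp add: top_r0)
  ultimately show ?thesis by (simp add: top_t0 mem_Times_iff prod_eq_iff)
qed
lemma psi0_act: "p \<in> topspace (obj P) \<Longrightarrow> \<pi> p \<in> cU (A i) \<Longrightarrow> x \<in> topspace (obj G) \<Longrightarrow>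
   psi0 (A i) (act0 P p x) = (\<pi> p, mul0 G (snd (psi0 (A i) p)) x)"
  using psi0_eq psi0_fst0 by (simp add: top_r0)

lemma psi1_mem: "f \<in> topspace (arr P) \<Longrightarrow> \<pi> (sr P f) \<in> cU (A i) \<Longrightarrow>
   psi1 (A i) f = (\<pi> (sr P f), snd (psi1 (A i) f)) \<and> snd (psi1 (A i) f) \<in> topspace (arr G) \<and>
   sr G (snd (psi1 (A i) f)) = snd (psi0 (A i) (sr P f)) \<and> tg G (snd (psi1 (A i) f)) = snd (psi0 (A i) (tg P f))"
proof -
  assume a: "f \<in> topspace (arr P)" "\<pi> (sr P f) \<in> cU (A i)"
  have m: "psi1 (A i) f \<in> topspace (arr (trivb G X (cU (A i))))"
    using psi_f a unfolding cfunctor_def by (elim conjE) (erule cmap_in, simp add: top_r1)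
  have st: "sr (trivb G X (cU (A i))) (psi1 (A i) f) = psi0 (A i) (sr P f) \<and> tg (trivb G X (cU (A i))) (psi1 (A i) f) = psi0 (A i) (tg P f)"
    using psi_f a unfolding cfunctor_def by (simp add: top_r1 restr_def)
  obtain u g where ug: "psi1 (A i) f = (u, g)" by fastforce
  have p0: "psi0 (A i) (sr P f) = (\<pi> (sr P f), snd (psi0 (A i) (sr P f)))" using psi0_mem[of "sr P f"] a by simp
  have e1: "(u, sr G g) = psi0 (A i) (sr P f)" "(u, tg G g) = psi0 (A i) (tg P f)" using st ug by (simp_all add: trivb_def)
  have "g \<in> topspace (arr G)" using m ug by (simp add: top_t1)
  then show ?thesis using e1 ug p0 by (metis fst_conv snd_conv)
qed

lemma psi1_fst: "f \<in> topspace (arr P) \<Longrightarrow> \<pi> (sr P f) \<in> cU (A i) \<Longrightarrow> fst (psi1 (A i) f) = \<pi> (sr P f)"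
  using psi1_mem by (metis fst_conv)
lemma psi0_fst: "p \<in> topspace (obj P) \<Longrightarrow> \<pi> p \<in> cU (A i) \<Longrightarrow> fst (psi0 (A i) p) = \<pi> p"
  using psi0_mem by (metis fst_conv)

lemma psi1_un: "p \<in> topspace (obj P) \<Longrightarrow> \<pi> p \<in> cU (A i) \<Longrightarrow> psi1 (A i) (un P p) = (\<pi> p, un G (snd (psi0 (A i) p)))"
proof -
  assume a: "p \<in> topspace (obj P)" "\<pi> p \<in> cU (A i)"
  have "psi1 (A i) (un P p) = un (trivb G X (cU (A i))) (psi0 (A i) p)"
    using psi_f a unfolding cfunctor_def by (simp add: top_r0 restr_def)
  also have "\<dots> = (\<pi> p, un G (snd (psi0 (A i) p)))"
    using psi0_mem[OF a] by (metis (no_types, lifting) case_prod_conv trivb_def tgpd.select_convs(5))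
  finally show ?thesis .
qed

lemma psi1_cp: "f \<in> topspace (arr P) \<Longrightarrow> \<pi> (sr P f) \<in> cU (A i) \<Longrightarrow> g \<in> topspace (arr P) \<Longrightarrow> tg P f = sr P g \<Longrightarrow>
   psi1 (A i) (cp P f g) = (\<pi> (sr P f), cp G (snd (psi1 (A i) f)) (snd (psi1 (A i) g)))"
proof -
  assume a: "f \<in> topspace (arr P)" "\<pi> (sr P f) \<in> cU (A i)" "g \<in> topspace (arr P)" "tg P f = sr P g"
  have b: "\<pi> (sr P g) \<in> cU (A i)" using a pi_srtg[of f] by simp
  have "psi1 (A i) (cp P f g) = cp (trivb G X (cU (A i))) (psi1 (A i) f) (psi1 (A i) g)"
    using psi_f a b unfolding cfunctor_def by (simp add: top_r1 restr_def)
  also have "\<dots> = (\<pi> (sr P f), cp G (snd (psi1 (A i) f)) (snd (psi1 (A i) g)))"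
    using psi1_mem[of f] psi1_mem[of g] a b
    by (metis (no_types, lifting) case_prod_conv trivb_def tgpd.select_convs(6))
  finally show ?thesis .
qed

lemma psi1_act: "f \<in> topspace (arr P) \<Longrightarrow> \<pi> (sr P f) \<in> cU (A i) \<Longrightarrow> g \<in> topspace (arr G) \<Longrightarrow>
   psi1 (A i) (act1 P f g) = (\<pi> (sr P f), mul1 G (snd (psi1 (A i) f)) g)"
  using psi1_eq psi1_fst[of f] by (simp add: top_r1)

lemma phi0_mem: "u \<in> cU (A i) \<Longrightarrow> x \<in> topspace (obj G) \<Longrightarrow> phi0 (A i) (u, x) \<in> topspace (obj P) \<and> \<pi> (phi0 (A i) (u, x)) = u"
proof -
  assume a: "u \<in> cU (A i)" "x \<in> topspace (obj G)"
  have "phi0 (A i) (u, x) \<in> topspace (obj (restr P \<pi> (cU (A i))))"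
    using phi_f a unfolding cfunctor_def by (elim conjE) (erule cmap_in, simp add: top_t0)
  then show ?thesis using phi0_pi0 a by (simp add: top_r0 top_t0)
qed

lemma phi1_mem: "u \<in> cU (A i) \<Longrightarrow> g \<in> topspace (arr G) \<Longrightarrow> phi1 (A i) (u, g) \<in> topspace (arr P) \<and>
   sr P (phi1 (A i) (u, g)) = phi0 (A i) (u, sr G g) \<and> tg P (phi1 (A i) (u, g)) = phi0 (A i) (u, tg G g)"
proof -
  assume a: "u \<in> cU (A i)" "g \<in> topspace (arr G)"
  have "phi1 (A i) (u, g) \<in> topspace (arr (restr P \<pi> (cU (A i))))"
    using phi_f a unfolding cfunctor_def by (elim conjE) (erule cmap_in, simp add: top_t1)
  moreover have "sr P (phi1 (A i) (u, g)) = phi0 (A i) (u, sr G g) \<and> tg P (phi1 (A i) (u, g)) = phi0 (A i) (u, tg G g)"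
    using phi_f a U_mem unfolding cfunctor_def by (simp add: top_t1 restr_def trivb_def)
  ultimately show ?thesis by (simp add: top_r1)
qed

lemma phi1_un: "u \<in> cU (A i) \<Longrightarrow> x \<in> topspace (obj G) \<Longrightarrow> phi1 (A i) (u, un G x) = un P (phi0 (A i) (u, x))"
  using phi_f U_mem unfolding cfunctor_def by (simp add: top_t0 restr_def trivb_def)

lemma eps_mem: "p \<in> topspace (obj P) \<Longrightarrow> \<pi> p \<in> cU (A i) \<Longrightarrow> eps (A i) p \<in> topspace (arr P) \<and>
   \<pi> (sr P (eps (A i) p)) \<in> cU (A i) \<and> sr P (eps (A i) p) = phi0 (A i) (psi0 (A i) p) \<and> tg P (eps (A i) p) = p"
proof -
  assume a: "p \<in> topspace (obj P)" "\<pi> p \<in> cU (A i)"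
  have "eps (A i) p \<in> topspace (arr (restr P \<pi> (cU (A i))))"
    using eps_n a unfolding cnat_def by (elim conjE) (erule cmap_in, simp add: top_r0)
  moreover have "sr P (eps (A i) p) = phi0 (A i) (psi0 (A i) p) \<and> tg P (eps (A i) p) = p"
    using eps_n a unfolding cnat_def by (simp add: top_r0 restr_def)
  ultimately show ?thesis by (simp add: top_r1)
qed

lemma eps_nat: "f \<in> topspace (arr P) \<Longrightarrow> \<pi> (sr P f) \<in> cU (A i) \<Longrightarrow>
   cp P (eps (A i) (sr P f)) f = cp P (phi1 (A i) (psi1 (A i) f)) (eps (A i) (tg P f))"
  using eps_n unfolding cnat_def by (simp add: top_r1 restr_def)

lemma eps_act: "p \<in> topspace (obj P) \<Longrightarrow> \<pi> p \<in> cU (A i) \<Longrightarrow> x \<in> topspace (obj G) \<Longrightarrow>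
   eps (A i) (act0 P p x) = act1 P (eps (A i) p) (un G x)"
  using eps_act0 by (simp add: top_r0)

lemma phi0_actx: "u \<in> cU (A i) \<Longrightarrow> x \<in> topspace (obj G) \<Longrightarrow> phi0 (A i) (u, x) = act0 P (phi0 (A i) (u, one0 G)) x"
  using phi0_act by (metis G0.lid G0.one_c)
lemma phi1_actx: "u \<in> cU (A i) \<Longrightarrow> g \<in> topspace (arr G) \<Longrightarrow> phi1 (A i) (u, g) = act1 P (phi1 (A i) (u, one1 G)) g"
  using phi1_act by (metis G1.lid G1.one_c)

end

lemma P_sr_un[simp]: "p \<in> topspace (obj P) \<Longrightarrow> sr P (un P p) = p"
  using Pgpd unfolding tgroupoid_def by simp

lemma un_inv: "y \<in> topspace (obj G) \<Longrightarrow> un G (inv0 G y) = inv1 G (un G y)"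
  by (rule G1.rcancel[of _ _ "un G y"]) (simp_all add: un_m[symmetric])

abbreviation "UU i \<equiv> cU (A i)"

lemma xA_mem: "i \<in> I \<Longrightarrow> j \<in> I \<Longrightarrow> u \<in> UU i \<Longrightarrow> u \<in> UU j \<Longrightarrow> xA G A i j u \<in> topspace (obj G)"
  unfolding xA_def using phi0_mem[of j u "one0 G"] psi0_mem[of i "phi0 (A j) (u, one0 G)"] by simp

lemma T0: "i \<in> I \<Longrightarrow> j \<in> I \<Longrightarrow> u \<in> UU i \<Longrightarrow> u \<in> UU j \<Longrightarrow> x \<in> topspace (obj G) \<Longrightarrow>
  psi0 (A i) (phi0 (A j) (u, x)) = (u, mul0 G (xA G A i j u) x)"
  unfolding xA_def using phi0_mem[of j u "one0 G"] phi0_actx[of j u x] psi0_act[of i "phi0 (A j) (u, one0 G)" x]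
  by simp

lemma T1: "i \<in> I \<Longrightarrow> j \<in> I \<Longrightarrow> u \<in> UU i \<Longrightarrow> u \<in> UU j \<Longrightarrow> g \<in> topspace (arr G) \<Longrightarrow>
  psi1 (A i) (phi1 (A j) (u, g)) = (u, mul1 G (un G (xA G A i j u)) g)"
proof -
  assume a: "i \<in> I" "j \<in> I" "u \<in> UU i" "u \<in> UU j" "g \<in> topspace (arr G)"
  let ?q = "phi0 (A j) (u, one0 G)"
  have q: "?q \<in> topspace (obj P)" "\<pi> ?q = u" using phi0_mem[of j u "one0 G"] a by auto
  have "phi1 (A j) (u, one1 G) = un P ?q" using phi1_un[of j u "one0 G"] a by simp
  then have "phi1 (A j) (u, g) = act1 P (un P ?q) g" using phi1_actx[of j u g] a by simp
  then show ?thesis using psi1_act[of i "un P ?q" g] psi1_un[of i ?q] q a by (simp add: xA_def)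
qed

definition "Ee i j k u = snd (psi1 (A i) (eps (A j) (phi0 (A k) (u, one0 G))))"

lemma Gam: assumes "i \<in> I" "j \<in> I" "k \<in> I" "u \<in> UU i" "u \<in> UU j" "u \<in> UU k" "x \<in> topspace (obj G)"
  shows "psi1 (A i) (eps (A j) (phi0 (A k) (u, x))) = (u, mul1 G (Ee i j k u) (un G x))"
proof -
  let ?q = "phi0 (A k) (u, one0 G)"
  have q: "?q \<in> topspace (obj P)" "\<pi> ?q = u" using phi0_mem[of k u "one0 G"] assms by auto
  have e: "eps (A j) ?q \<in> topspace (arr P)" "\<pi> (sr P (eps (A j) ?q)) = u"
    using eps_mem[of j ?q] q assms pi_srtg[of "eps (A j) ?q"] by auto
  have "phi0 (A k) (u, x) = act0 P ?q x" using phi0_actx[of k u x] assms by simp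
  then have "eps (A j) (phi0 (A k) (u, x)) = act1 P (eps (A j) ?q) (un G x)"
    using eps_act[of j ?q x] q assms by simp
  then show ?thesis using psi1_act[of i "eps (A j) ?q" "un G x"] e assms by (simp add: Ee_def)
qed

lemma Ee_props: assumes "i \<in> I" "j \<in> I" "k \<in> I" "u \<in> UU i" "u \<in> UU j" "u \<in> UU k"
  shows "Ee i j k u \<in> topspace (arr G) \<and> sr G (Ee i j k u) = mul0 G (xA G A i j u) (xA G A j k u)
     \<and> tg G (Ee i j k u) = xA G A i k u"
proof -
  let ?q = "phi0 (A k) (u, one0 G)"
  have q: "?q \<in> topspace (obj P)" "\<pi> ?q = u" using phi0_mem[of k u "one0 G"] assms by auto
  have e: "eps (A j) ?q \<in> topspace (arr P)" "\<pi> (sr P (eps (A j) ?q)) = u"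
     "sr P (eps (A j) ?q) = phi0 (A j) (psi0 (A j) ?q)" "tg P (eps (A j) ?q) = ?q"
    using eps_mem[of j ?q] q assms pi_srtg[of "eps (A j) ?q"] by auto
  have pq: "psi0 (A j) ?q = (u, xA G A j k u)" using T0[of j k u "one0 G"] assms xA_mem[of j k u] by simp
  have m: "Ee i j k u \<in> topspace (arr G)" "sr G (Ee i j k u) = snd (psi0 (A i) (sr P (eps (A j) ?q)))"
     "tg G (Ee i j k u) = snd (psi0 (A i) (tg P (eps (A j) ?q)))"
    using psi1_mem[of i "eps (A j) ?q"] e assms unfolding Ee_def by auto
  have s: "snd (psi0 (A i) (sr P (eps (A j) ?q))) = mul0 G (xA G A i j u) (xA G A j k u)"
    using e(3) pq T0[of i j u "xA G A j k u"] assms xA_mem[of j k u] by simp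
  have t: "snd (psi0 (A i) (tg P (eps (A j) ?q))) = xA G A i k u"
    using e(4) by (simp add: xA_def)
  show ?thesis using m s t by simp
qed

lemma eA_eq: assumes "i \<in> I" "j \<in> I" "k \<in> I" "u \<in> UU i" "u \<in> UU j" "u \<in> UU k"
  shows "eA G A i j k u = mul1 G (Ee i j k u) (un G (inv0 G (mul0 G (xA G A i j u) (xA G A j k u))))"
proof -
  let ?a = "xA G A i j u" and ?b = "xA G A j k u" and ?E = "Ee i j k u"
  have ab: "?a \<in> topspace (obj G)" "?b \<in> topspace (obj G)" using xA_mem assms by auto
  have E: "?E \<in> topspace (arr G)" using Ee_props assms by auto
  let ?e = "mul1 G ?E (un G (inv0 G (mul0 G ?a ?b)))"
  show ?thesis unfolding eA_def
  proof (rule the_equality)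
    show "?e \<in> topspace (arr G) \<and> (\<forall>x\<in>topspace (obj G). psi1 (A i) (eps (A j) (phi0 (A k) (u, x))) =
        (u, mul1 G ?e (un G (mul0 G (mul0 G ?a ?b) x))))"
      using Gam[OF assms] ab E by (simp add: un_m un_inv G0.inv_m)
  next
    fix e assume h: "e \<in> topspace (arr G) \<and> (\<forall>x\<in>topspace (obj G). psi1 (A i) (eps (A j) (phi0 (A k) (u, x))) =
        (u, mul1 G e (un G (mul0 G (mul0 G ?a ?b) x))))"
    then have "mul1 G ?E (un G (one0 G)) = mul1 G e (un G (mul0 G (mul0 G ?a ?b) (one0 G)))"
      using Gam[OF assms, of "one0 G"] by auto
    then have "mul1 G ?E (inv1 G (mul1 G (un G ?a) (un G ?b))) = mul1 G e (mul1 G (mul1 G (un G ?a) (un G ?b)) (inv1 G (mul1 G (un G ?a) (un G ?b))))"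
      using ab E h by (simp add: un_m)
    then show "e = ?e" using ab E h by (simp add: un_m un_inv G1.inv_m G0.inv_m)
  qed
qed


lemma coc_tg: assumes "i \<in> I" "j \<in> I" "k \<in> I" "u \<in> UU i" "u \<in> UU j" "u \<in> UU k"
  shows "mul0 G (mul0 G (tg G (eA G A i j k u)) (xA G A i j u)) (xA G A j k u) = xA G A i k u"
  using eA_eq[OF assms] Ee_props[OF assms] xA_mem assms by (simp add: G0.inv_m)

lemma coc_ker: assumes "i \<in> I" "j \<in> I" "k \<in> I" "u \<in> UU i" "u \<in> UU j" "u \<in> UU k"
  shows "eA G A i j k u \<in> kerS G"
  using eA_eq[OF assms] Ee_props[OF assms] xA_mem assms by (simp add: G0.inv_m kerS_def)

lemma coc_4: assumes I: "i \<in> I" "j \<in> I" "k \<in> I" "l \<in> I" and U: "u \<in> UU i" "u \<in> UU j" "u \<in> UU k" "u \<in> UU l"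
  shows "mul1 G (eA G A i k l u) (eA G A i j k u) = mul1 G (eA G A i j l u) (conj2 G (xA G A i j u) (eA G A j k l u))"
proof -
  let ?q = "phi0 (A l) (u, one0 G)"
  let ?f = "eps (A k) ?q"
  have xs: "xA G A a b u \<in> topspace (obj G)" if "a \<in> {i,j,k,l}" "b \<in> {i,j,k,l}" for a b
    using xA_mem[of a b u] that I U by auto
  have Es: "Ee a b c u \<in> topspace (arr G) \<and> sr G (Ee a b c u) = mul0 G (xA G A a b u) (xA G A b c u)
     \<and> tg G (Ee a b c u) = xA G A a c u" if "a \<in> {i,j,k,l}" "b \<in> {i,j,k,l}" "c \<in> {i,j,k,l}" for a b c
    using Ee_props[of a b c u] that I U by auto
  have q: "?q \<in> topspace (obj P)" "\<pi> ?q = u" using phi0_mem[of l u "one0 G"] I U by auto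
  have f: "?f \<in> topspace (arr P)" "\<pi> (sr P ?f) = u" "sr P ?f = phi0 (A k) (psi0 (A k) ?q)" "tg P ?f = ?q"
    using eps_mem[of k ?q] q I U pi_srtg[of ?f] by auto
  have pq: "psi0 (A k) ?q = (u, xA G A k l u)" using T0[of k l u "one0 G"] I U xs by simp
  let ?s = "phi0 (A k) (u, xA G A k l u)"
  have s: "?s \<in> topspace (obj P)" "\<pi> ?s = u" using phi0_mem[of k u "xA G A k l u"] I U xs by auto
  have nat: "cp P (eps (A j) ?s) ?f = cp P (phi1 (A j) (psi1 (A j) ?f)) (eps (A j) ?q)"
    using eps_nat[of j ?f] f pq I U by simp
  have ej: "eps (A j) ?s \<in> topspace (arr P)" "\<pi> (sr P (eps (A j) ?s)) = u" "tg P (eps (A j) ?s) = ?s"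
    using eps_mem[of j ?s] s I U pi_srtg[of "eps (A j) ?s"] by auto
  have eq: "eps (A j) ?q \<in> topspace (arr P)" "\<pi> (sr P (eps (A j) ?q)) = u" "sr P (eps (A j) ?q) = phi0 (A j) (psi0 (A j) ?q)"
    using eps_mem[of j ?q] q I U pi_srtg[of "eps (A j) ?q"] by auto
  have p1f: "psi1 (A j) ?f = (u, Ee j k l u)" using Gam[of j k l u "one0 G"] I U Es[of j k l] by simp
  have pq2: "psi0 (A j) ?q = (u, xA G A j l u)" using T0[of j l u "one0 G"] I U xs by simp
  have ph: "phi1 (A j) (u, Ee j k l u) \<in> topspace (arr P)" "\<pi> (sr P (phi1 (A j) (u, Ee j k l u))) = u"
     "tg P (phi1 (A j) (u, Ee j k l u)) = phi0 (A j) (u, xA G A j l u)"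
    using phi1_mem[of j u "Ee j k l u"] phi0_mem[of j u] Es[of j k l] I U xs by auto
  have L: "psi1 (A i) (cp P (eps (A j) ?s) ?f) = (u, cp G (mul1 G (Ee i j k u) (un G (xA G A k l u))) (Ee i k l u))"
    using psi1_cp[of i "eps (A j) ?s" ?f] ej f pq I U Gam[of i j k u "xA G A k l u"] Gam[of i k l u "one0 G"] xs Es[of i k l] by simp
  have R: "psi1 (A i) (cp P (phi1 (A j) (psi1 (A j) ?f)) (eps (A j) ?q)) = (u, cp G (mul1 G (un G (xA G A i j u)) (Ee j k l u)) (Ee i j l u))"
    using psi1_cp[of i "phi1 (A j) (u, Ee j k l u)" "eps (A j) ?q"] ph eq pq2 p1f I U
      T1[of i j u "Ee j k l u"] Es[of j k l] Es[of i j l] Gam[of i j l u "one0 G"] by simp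
  have H: "cp G (mul1 G (Ee i j k u) (un G (xA G A k l u))) (Ee i k l u) = cp G (mul1 G (un G (xA G A i j u)) (Ee j k l u)) (Ee i j l u)"
    using L R nat by simp
  have H2: "mul1 G (Ee i k l u) (mul1 G (un G (inv0 G (mul0 G (xA G A i k u) (xA G A k l u)))) (mul1 G (Ee i j k u) (un G (xA G A k l u))))
    = mul1 G (Ee i j l u) (mul1 G (un G (inv0 G (mul0 G (xA G A i j u) (xA G A j l u)))) (mul1 G (un G (xA G A i j u)) (Ee j k l u)))"
  proof -
    have "cp G (mul1 G (Ee i j k u) (un G (xA G A k l u))) (Ee i k l u) = mul1 G (Ee i k l u) (mul1 G (un G (inv0 G (mul0 G (xA G A i k u) (xA G A k l u)))) (mul1 G (Ee i j k u) (un G (xA G A k l u))))"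
      using cp_formula[of "mul1 G (Ee i j k u) (un G (xA G A k l u))" "Ee i k l u"] Es[of i j k] Es[of i k l] xs by simp
    moreover have "cp G (mul1 G (un G (xA G A i j u)) (Ee j k l u)) (Ee i j l u) = mul1 G (Ee i j l u) (mul1 G (un G (inv0 G (mul0 G (xA G A i j u) (xA G A j l u)))) (mul1 G (un G (xA G A i j u)) (Ee j k l u)))"
      using cp_formula[of "mul1 G (un G (xA G A i j u)) (Ee j k l u)" "Ee i j l u"] Es[of j k l] Es[of i j l] xs by simp
    ultimately show ?thesis using H by simp
  qed
  let ?W = "mul1 G (inv1 G (un G (xA G A k l u))) (un G (inv0 G (mul0 G (xA G A i j u) (xA G A j k u))))"
  have e1: "mul1 G (eA G A i k l u) (eA G A i j k u) = mul1 G (mul1 G (Ee i k l u) (mul1 G (un G (inv0 G (mul0 G (xA G A i k u) (xA G A k l u)))) (mul1 G (Ee i j k u) (un G (xA G A k l u))))) ?W"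
    using eA_eq[of i k l u] eA_eq[of i j k u] I U Es[of i k l] Es[of i j k] xs
    by (simp add: un_m un_inv G0.inv_m G1.inv_m)
  have e2: "mul1 G (eA G A i j l u) (conj2 G (xA G A i j u) (eA G A j k l u)) = mul1 G (mul1 G (Ee i j l u) (mul1 G (un G (inv0 G (mul0 G (xA G A i j u) (xA G A j l u)))) (mul1 G (un G (xA G A i j u)) (Ee j k l u)))) ?W"
    using eA_eq[of i j l u] eA_eq[of j k l u] I U Es[of i j l] Es[of j k l] xs
    by (simp add: un_m un_inv G0.inv_m G1.inv_m conj2_def)
  show ?thesis using e1 e2 H2 by simp
qed


lemma cont_q: assumes "i \<in> I" "k \<in> I" "S \<subseteq> UU i" "S \<subseteq> UU k"
  shows "continuous_map (subtopology X S) (subtopology (obj P) {p. \<pi> p \<in> UU i}) (\<lambda>u. phi0 (A k) (u, one0 G))"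
proof -
  have "continuous_map (subtopology X S) (prod_topology (subtopology X (UU k)) (obj G)) (\<lambda>u. (u, one0 G))"
    by (rule continuous_map_pairedI) (use cm_incl[OF assms(4)] in auto)
  then have c: "continuous_map (subtopology X S) (subtopology (obj P) {p. \<pi> p \<in> UU k}) (\<lambda>u. phi0 (A k) (u, one0 G))"
    using cm_comp phi0_cont[OF assms(2)] by blast
  show ?thesis unfolding continuous_map_in_subtopology
  proof
    show "continuous_map (subtopology X S) (obj P) (\<lambda>u. phi0 (A k) (u, one0 G))"
      using c continuous_map_into_fulltopology by blast
    show "(\<lambda>u. phi0 (A k) (u, one0 G)) \<in> topspace (subtopology X S) \<rightarrow> {p. \<pi> p \<in> UU i}"
    proof
      fix u assume "u \<in> topspace (subtopology X S)"
      then have "u \<in> UU k" "u \<in> UU i" using assms by auto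
      then show "phi0 (A k) (u, one0 G) \<in> {p. \<pi> p \<in> UU i}" using phi0_mem[OF assms(2), of u "one0 G"] by simp
    qed
  qed
qed

lemma cont_xA: assumes "i \<in> I" "j \<in> I" "S \<subseteq> UU i" "S \<subseteq> UU j"
  shows "continuous_map (subtopology X S) (obj G) (xA G A i j)"
proof -
  have "continuous_map (subtopology X S) (prod_topology (subtopology X (UU i)) (obj G)) (\<lambda>u. psi0 (A i) (phi0 (A j) (u, one0 G)))"
    using cm_comp[OF cont_q[OF assms] psi0_cont[OF assms(1)]] .
  then have "continuous_map (subtopology X S) (obj G) (\<lambda>u. snd (psi0 (A i) (phi0 (A j) (u, one0 G))))"
    using cm_comp continuous_map_snd by blast
  then show ?thesis unfolding xA_def[abs_def] .
qed

lemma cont_Ee: assumes "i \<in> I" "j \<in> I" "k \<in> I" "S \<subseteq> UU i" "S \<subseteq> UU j" "S \<subseteq> UU k"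
  shows "continuous_map (subtopology X S) (arr G) (Ee i j k)"
proof -
  have c1: "continuous_map (subtopology X S) (subtopology (arr P) {f. \<pi> (sr P f) \<in> UU j}) (\<lambda>u. eps (A j) (phi0 (A k) (u, one0 G)))"
    using cm_comp[OF cont_q[of j k S] eps_cont[of j]] assms by blast
  have c2: "continuous_map (subtopology X S) (subtopology (arr P) {f. \<pi> (sr P f) \<in> UU i}) (\<lambda>u. eps (A j) (phi0 (A k) (u, one0 G)))"
    unfolding continuous_map_in_subtopology
  proof
    show "continuous_map (subtopology X S) (arr P) (\<lambda>u. eps (A j) (phi0 (A k) (u, one0 G)))"
      using c1 continuous_map_into_fulltopology by blast
    show "(\<lambda>u. eps (A j) (phi0 (A k) (u, one0 G))) \<in> topspace (subtopology X S) \<rightarrow> {f. \<pi> (sr P f) \<in> UU i}"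
    proof
      fix u assume u: "u \<in> topspace (subtopology X S)"
      then have uu: "u \<in> UU i" "u \<in> UU j" "u \<in> UU k" using assms by auto
      let ?q = "phi0 (A k) (u, one0 G)"
      have q: "?q \<in> topspace (obj P)" "\<pi> ?q = u" using phi0_mem[of k u "one0 G"] assms uu by auto
      have "\<pi> (sr P (eps (A j) ?q)) = u"
        using eps_mem[of j ?q] q assms uu pi_srtg[of "eps (A j) ?q"] by auto
      then show "eps (A j) ?q \<in> {f. \<pi> (sr P f) \<in> UU i}" using uu by simp
    qed
  qed
  have "continuous_map (subtopology X S) (arr G) (\<lambda>u. snd (psi1 (A i) (eps (A j) (phi0 (A k) (u, one0 G)))))"
    using cm_comp[OF cm_comp[OF c2 psi1_cont[OF assms(1)]] continuous_map_snd] .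
  then show ?thesis unfolding Ee_def[abs_def] .
qed

lemma cont_eA: assumes "i \<in> I" "j \<in> I" "k \<in> I" "S \<subseteq> UU i" "S \<subseteq> UU j" "S \<subseteq> UU k"
  shows "continuous_map (subtopology X S) (subtopology (arr G) (kerS G)) (eA G A i j k)"
proof -
  have cx: "continuous_map (subtopology X S) (obj G) (\<lambda>u. mul0 G (xA G A i j u) (xA G A j k u))"
    using G0.cont_m2[OF cont_xA[of i j S] cont_xA[of j k S]] assms by blast
  have "continuous_map (subtopology X S) (arr G) (\<lambda>u. un G (inv0 G (mul0 G (xA G A i j u) (xA G A j k u))))"
    using cm_comp[OF cm_comp[OF cx G0.cont_i] cont_un] .
  then have c: "continuous_map (subtopology X S) (arr G) (\<lambda>u. mul1 G (Ee i j k u) (un G (inv0 G (mul0 G (xA G A i j u) (xA G A j k u)))))"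
    using G1.cont_m2 cont_Ee[OF assms] by blast
  have c': "continuous_map (subtopology X S) (arr G) (eA G A i j k)"
  proof (rule continuous_map_eq[OF c])
    fix u assume "u \<in> topspace (subtopology X S)"
    then have "u \<in> UU i" "u \<in> UU j" "u \<in> UU k" using assms by auto
    then show "mul1 G (Ee i j k u) (un G (inv0 G (mul0 G (xA G A i j u) (xA G A j k u)))) = eA G A i j k u"
      using eA_eq[of i j k u] assms by simp
  qed
  show ?thesis unfolding continuous_map_in_subtopology
  proof (intro conjI c' Pi_I)
    fix u assume "u \<in> topspace (subtopology X S)"
    then have "u \<in> UU i" "u \<in> UU j" "u \<in> UU k" using assms by auto
    then show "eA G A i j k u \<in> kerS G" using coc_ker[of i j k u] assms by simp
  qed
qed

end

theorem lemma9:
  fixes G :: "('x,'g) tgrp2" and X :: "'a topology" and P :: "('p,'q,'x,'g) gspace"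
    and \<pi> :: "'p \<Rightarrow> 'a" and I :: "'i set" and A :: "'i \<Rightarrow> ('a,'p,'q,'x,'g) chart"
  assumes "two_group G"
    and "g2space G P"
    and "bundle_functor X P \<pi>"
    and "is_atlas G X P \<pi> I A"
  shows "cech_cocycle G X I (\<lambda>i. cU (A i)) (xA G A) (eA G A)"
proof -
  interpret B: bnd G X P \<pi> I A using assms by (simp add: bnd_def)
  show ?thesis unfolding cech_cocycle_def
  proof (intro conjI ballI)
    fix i j assume "i \<in> I" "j \<in> I"
    then show "continuous_map (subtopology X (cU (A i) \<inter> cU (A j))) (obj G) (xA G A i j)"
      by (intro B.cont_xA) auto
  next
    fix i j k assume "i \<in> I" "j \<in> I" "k \<in> I"
    then show "continuous_map (subtopology X (cU (A i) \<inter> cU (A j) \<inter> cU (A k))) (subtopology (arr G) (kerS G)) (eA G A i j k)"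
      by (intro B.cont_eA) auto
  next
    fix i j k u assume "i \<in> I" "j \<in> I" "k \<in> I" "u \<in> cU (A i) \<inter> cU (A j) \<inter> cU (A k)"
    then show "mul0 G (mul0 G (tg G (eA G A i j k u)) (xA G A i j u)) (xA G A j k u) = xA G A i k u"
      by (intro B.coc_tg) auto
  next
    fix i j k l u assume "i \<in> I" "j \<in> I" "k \<in> I" "l \<in> I" "u \<in> cU (A i) \<inter> cU (A j) \<inter> cU (A k) \<inter> cU (A l)"
    then show "mul1 G (eA G A i k l u) (eA G A i j k u) = mul1 G (eA G A i j l u) (conj2 G (xA G A i j u) (eA G A j k l u))"
      by (intro B.coc_4) auto
  qed
qed

end
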